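(* (i) If $\rho_0$ and $\rho_{\rm target}$ are diagonal density matrices, then for the zero control $\bar c\equiv0$ the solutions $\bar\rho$ of the master equation and $\bar\chi$ of the adjoint system are diagonal for all $t\in[0,T]$, and $\mathcal K^u(\bar\chi(t),\bar\rho(t))=0$ for all $t\in[0,T]$, for any Hermitian $V$ and all admissible parameter values. (ii) If moreover $\rho_0=\frac14\mathbb I_4$ and $\rho_{\rm target}={\rm diag}(1,0,0,0)$, then for all $t\in[0,T]$ $$\mathcal K^{n_1}(\bar\chi(t),\bar\rho(t))=-e^{-2\varepsilon(\Omega_1+\Omega_2)T}\big(e^{2\varepsilon\Omega_1t}-1\big)\big(2e^{2\varepsilon\Omega_2T}-1\big)\varepsilon\Omega_1\le0,$$ $$\mathcal K^{n_2}(\bar\chi(t),\bar\rho(t))=-e^{-2\varepsilon(\Omega_1+\Omega_2)T}\big(e^{2\varepsilon\Omega_2t}-1\big)\big(2e^{2\varepsilon\Omega_1T}-1\big)\varepsilon\Omega_2\le0,$$ and consequently the zero control $\bar c\equiv0$ satisfies the maximum conditions $\max_{|u|\le\mu}\mathcal K^u(\bar\chi(t),\bar\rho(t))u=\mathcal K^u(\bar\chi(t),\bar\rho(t))\cdot0$ and $\max_{n_j\in[0,n_{\max}]}\mathcal K^{n_j}(\bar\chi(t),\bar\rho(t))n_j=\mathcal K^{n_j}(\bar\chi(t),\bar\rho(t))\cdot 0$ ($j=1,2$) for all $t\in[0,T]$, for every $T>0$ and all admissible parameter values.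
   Context: Let $\sigma_x,\sigma_y,\sigma_z$ be the Pauli matrices, $\mathbb I_2,\mathbb I_4$ identity matrices, $\sigma^+=\begin{pmatrix}0&0\\1&0\end{pmatrix}$, $\sigma^-=\begin{pmatrix}0&1\\0&0\end{pmatrix}$, $\sigma_1^\pm=\sigma^\pm\otimes\mathbb I_2$, $\sigma_2^\pm=\mathbb I_2\otimes\sigma^\pm$, $W_1=\sigma_z\otimes\mathbb I_2$, $W_2=\mathbb I_2\otimes\sigma_z$. Fix parameters $\varepsilon,\omega_j,\Lambda_j,\Omega_j>0$ ($j=1,2$), $H_0=\frac{\omega_1}{2}W_1+\frac{\omega_2}{2}W_2$, and a Hermitian $4\times4$ matrix $V$ (in the paper $V=Q_1\otimes\mathbb I_2+\mathbb I_2\otimes Q_2$ or $V=Q_1\otimes Q_2$ with $Q_j=\sin\theta_j\cos\varphi_j\sigma_x+\sin\theta_j\sin\varphi_j\sigma_y+\cos\theta_j\sigma_z$). For $c=(u,n_1,n_2)\in\mathbb R^3$ let $H_c=H_0+\varepsilon\sum_{j=1}^2\Lambda_j n_jW_j+uV$ and $$\mathcal L^D_n(\rho)=\sum_{j=1}^2\Big[\Omega_j(n_j+1)\big(2\sigma_j^-\rho\sigma_j^+-\{\sigma_j^+\sigma_j^-,\rho\}\big)+\Omega_jn_j\big(2\sigma_j^+\rho\sigma_j^--\{\sigma_j^-\sigma_j^+,\rho\}\big)\Big],$$ $$\mathcal L^{D,\dagger}_n(\chi)=\sum_{j=1}^2\Big[\Omega_j(n_j+1)\big(2\sigma_j^+\chi\sigma_j^--\{\sigma_j^+\sigma_j^-,\chi\}\big)+\Omega_jn_j\big(2\sigma_j^-\chi\sigma_j^+-\{\sigma_j^-\sigma_j^+,\chi\}\big)\Big],$$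 where $\{A,B\}=AB+BA$, $[A,B]=AB-BA$. Fix $T>0$, $\mu,n_{\max}>0$, $Q=[-\mu,\mu]\times[0,n_{\max}]^2$; admissible controls are piecewise continuous $c=(u,n_1,n_2):[0,T]\to Q$. Fix density matrices $\rho_0,\rho_{\rm target}$ ($4\times 4$, positive semidefinite, trace one). The master equation is $\dot\rho(t)=-i[H_{c(t)},\rho(t)]+\varepsilon\mathcal L^D_{n(t)}(\rho(t))$, $\rho(0)=\rho_0$; the adjoint system is $\dot\chi(t)=-i[H_{c(t)},\chi(t)]-\varepsilon\mathcal L^{D,\dagger}_{n(t)}(\chi(t))$, $\chi(T)=\rho_{\rm target}$ (solved backward). For matrices, $\langle A,B\rangle={\rm Tr}(A^\dagger B)$. The objective is $J_1(c)={\rm Tr}(\rho(T)\rho_{\rm target})$ where $\rho$ solves the master equation with control $c$. The switching functions $\mathcal K^c=(\mathcal K^u,\mathcal K^{n_1},\mathcal K^{n_2})$ are the coefficients of $u,n_1,n_2$ in $\langle\chi,-i[H_c,\rho]+\varepsilon\mathcal L^D_n(\rho)\rangle$: $\mathcal K^u(\chi,\rho)=\langle\chi,-i[V,\rho]\rangle$, $\mathcal K^{n_j}(\chi,\rho)=\big\langle\chi,-i\varepsilon\Lambda_j[W_j,\rho]+\varepsilon\Omega_j\big(2\sigma_j^-\rho\sigma_j^++2\sigma_j^+\rho\sigma_j^--2\rho\big)\big\rangle$, $j=1,2$ (real for Hermitian $\chi,\rho$). *)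

theory Defs
  imports "HOL-Analysis.Analysis"
begin

text \<open>Qubit basis indexed by bool (False = |0>, True = |1>); the two-qubit
space is indexed by bool \<times> bool with the tensor basis |a b> = (a,b), so the
standard ordering |00>,|01>,|10>,|11> corresponds to (F,F),(F,T),(T,F),(T,T).\<close>

type_synonym mat2 = "complex ^ bool ^ bool"
type_synonym mat4 = "complex ^ (bool \<times> bool) ^ (bool \<times> bool)"

definition cscale :: "complex \<Rightarrow> complex ^ 'n ^ 'm \<Rightarrow> complex ^ 'n ^ 'm" where
  "cscale c A = (\<chi> i j. c * A $ i $ j)"

definition cadj :: "complex ^ 'n ^ 'n \<Rightarrow> complex ^ 'n ^ 'n" where
  "cadj A = (\<chi> i j. cnj (A $ j $ i))"

definition hermitian :: "complex ^ 'n ^ 'n \<Rightarrow> bool" where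
  "hermitian A \<longleftrightarrow> cadj A = A"

definition psd :: "complex ^ 'n ^ 'n \<Rightarrow> bool" where
  "psd A \<longleftrightarrow> (\<forall>x :: complex ^ 'n. 0 \<le> Re (\<Sum>i\<in>UNIV. cnj (x $ i) * (A *v x) $ i))"

definition density_matrix :: "complex ^ 'n ^ 'n \<Rightarrow> bool" where
  "density_matrix A \<longleftrightarrow> hermitian A \<and> psd A \<and> trace A = 1"

definition is_diag :: "complex ^ 'n ^ 'n \<Rightarrow> bool" where
  "is_diag A \<longleftrightarrow> (\<forall>i j. i \<noteq> j \<longrightarrow> A $ i $ j = 0)"

definition hs_inner :: "complex ^ 'n ^ 'n \<Rightarrow> complex ^ 'n ^ 'n \<Rightarrow> complex" where
  "hs_inner A B = trace (cadj A ** B)"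

definition commut :: "complex ^ 'n ^ 'n \<Rightarrow> complex ^ 'n ^ 'n \<Rightarrow> complex ^ 'n ^ 'n" where
  "commut A B = A ** B - B ** A"

definition anticommut :: "complex ^ 'n ^ 'n \<Rightarrow> complex ^ 'n ^ 'n \<Rightarrow> complex ^ 'n ^ 'n" where
  "anticommut A B = A ** B + B ** A"

definition kron :: "mat2 \<Rightarrow> mat2 \<Rightarrow> mat4" where
  "kron A B = (\<chi> i j. A $ fst i $ fst j * B $ snd i $ snd j)"

definition sigma_z :: mat2 where
  "sigma_z = (\<chi> i j. if i = j then (if i then -1 else 1) else 0)"

definition sigma_plus :: mat2 where
  "sigma_plus = (\<chi> i j. if i \<and> \<not> j then 1 else 0)"

definition sigma_minus :: mat2 where
  "sigma_minus = (\<chi> i j. if \<not> i \<and> j then 1 else 0)"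

definition I2 :: mat2 where "I2 = mat 1"
definition I4 :: mat4 where "I4 = mat 1"

definition sp1 :: mat4 where "sp1 = kron sigma_plus I2"
definition sm1 :: mat4 where "sm1 = kron sigma_minus I2"
definition sp2 :: mat4 where "sp2 = kron I2 sigma_plus"
definition sm2 :: mat4 where "sm2 = kron I2 sigma_minus"
definition W1 :: mat4 where "W1 = kron sigma_z I2"
definition W2 :: mat4 where "W2 = kron I2 sigma_z"

definition H0 :: "real \<Rightarrow> real \<Rightarrow> mat4" where
  "H0 \<omega>1 \<omega>2 = cscale (of_real (\<omega>1 / 2)) W1 + cscale (of_real (\<omega>2 / 2)) W2"

definition Hc :: "real \<Rightarrow> real \<Rightarrow> real \<Rightarrow> real \<Rightarrow> real \<Rightarrow> mat4 \<Rightarrow> real \<Rightarrow> real \<Rightarrow> real \<Rightarrow> mat4" where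
  "Hc \<epsilon> \<omega>1 \<omega>2 \<Lambda>1 \<Lambda>2 V u n1 n2 =
     H0 \<omega>1 \<omega>2 + (cscale (of_real (\<epsilon> * \<Lambda>1 * n1)) W1 + cscale (of_real (\<epsilon> * \<Lambda>2 * n2)) W2)
     + cscale (of_real u) V"

definition LD :: "real \<Rightarrow> real \<Rightarrow> real \<Rightarrow> real \<Rightarrow> mat4 \<Rightarrow> mat4" where
  "LD \<Omega>1 \<Omega>2 n1 n2 \<rho> =
     (cscale (of_real (\<Omega>1 * (n1 + 1))) (cscale 2 (sm1 ** \<rho> ** sp1) - anticommut (sp1 ** sm1) \<rho>)
      + cscale (of_real (\<Omega>1 * n1)) (cscale 2 (sp1 ** \<rho> ** sm1) - anticommut (sm1 ** sp1) \<rho>))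
   + (cscale (of_real (\<Omega>2 * (n2 + 1))) (cscale 2 (sm2 ** \<rho> ** sp2) - anticommut (sp2 ** sm2) \<rho>)
      + cscale (of_real (\<Omega>2 * n2)) (cscale 2 (sp2 ** \<rho> ** sm2) - anticommut (sm2 ** sp2) \<rho>))"

definition LD_adj :: "real \<Rightarrow> real \<Rightarrow> real \<Rightarrow> real \<Rightarrow> mat4 \<Rightarrow> mat4" where
  "LD_adj \<Omega>1 \<Omega>2 n1 n2 chi =
     (cscale (of_real (\<Omega>1 * (n1 + 1))) (cscale 2 (sp1 ** chi ** sm1) - anticommut (sp1 ** sm1) chi)
      + cscale (of_real (\<Omega>1 * n1)) (cscale 2 (sm1 ** chi ** sp1) - anticommut (sm1 ** sp1) chi))
   + (cscale (of_real (\<Omega>2 * (n2 + 1))) (cscale 2 (sp2 ** chi ** sm2) - anticommut (sp2 ** sm2) chi)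
      + cscale (of_real (\<Omega>2 * n2)) (cscale 2 (sm2 ** chi ** sp2) - anticommut (sm2 ** sp2) chi))"

definition master_rhs :: "real \<Rightarrow> real \<Rightarrow> real \<Rightarrow> real \<Rightarrow> real \<Rightarrow> real \<Rightarrow> real \<Rightarrow> mat4
    \<Rightarrow> real \<Rightarrow> real \<Rightarrow> real \<Rightarrow> mat4 \<Rightarrow> mat4" where
  "master_rhs \<epsilon> \<omega>1 \<omega>2 \<Lambda>1 \<Lambda>2 \<Omega>1 \<Omega>2 V u n1 n2 \<rho> =
     cscale (- \<i>) (commut (Hc \<epsilon> \<omega>1 \<omega>2 \<Lambda>1 \<Lambda>2 V u n1 n2) \<rho>)
     + cscale (of_real \<epsilon>) (LD \<Omega>1 \<Omega>2 n1 n2 \<rho>)"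

definition adjoint_rhs :: "real \<Rightarrow> real \<Rightarrow> real \<Rightarrow> real \<Rightarrow> real \<Rightarrow> real \<Rightarrow> real \<Rightarrow> mat4
    \<Rightarrow> real \<Rightarrow> real \<Rightarrow> real \<Rightarrow> mat4 \<Rightarrow> mat4" where
  "adjoint_rhs \<epsilon> \<omega>1 \<omega>2 \<Lambda>1 \<Lambda>2 \<Omega>1 \<Omega>2 V u n1 n2 chi =
     cscale (- \<i>) (commut (Hc \<epsilon> \<omega>1 \<omega>2 \<Lambda>1 \<Lambda>2 V u n1 n2) chi)
     - cscale (of_real \<epsilon>) (LD_adj \<Omega>1 \<Omega>2 n1 n2 chi)"

definition K_u :: "mat4 \<Rightarrow> mat4 \<Rightarrow> mat4 \<Rightarrow> complex" where
  "K_u V chi \<rho> = hs_inner chi (cscale (- \<i>) (commut V \<rho>))"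

definition K_n_gen :: "real \<Rightarrow> real \<Rightarrow> real \<Rightarrow> mat4 \<Rightarrow> mat4 \<Rightarrow> mat4 \<Rightarrow> mat4 \<Rightarrow> mat4 \<Rightarrow> complex" where
  "K_n_gen \<epsilon> \<Lambda> \<Omega> W sm sp chi \<rho> =
     hs_inner chi (cscale (- \<i> * of_real (\<epsilon> * \<Lambda>)) (commut W \<rho>)
       + cscale (of_real (\<epsilon> * \<Omega>)) (cscale 2 (sm ** \<rho> ** sp) + cscale 2 (sp ** \<rho> ** sm) - cscale 2 \<rho>))"

definition K_n1 :: "real \<Rightarrow> real \<Rightarrow> real \<Rightarrow> mat4 \<Rightarrow> mat4 \<Rightarrow> complex" where
  "K_n1 \<epsilon> \<Lambda>1 \<Omega>1 = K_n_gen \<epsilon> \<Lambda>1 \<Omega>1 W1 sm1 sp1"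

definition K_n2 :: "real \<Rightarrow> real \<Rightarrow> real \<Rightarrow> mat4 \<Rightarrow> mat4 \<Rightarrow> complex" where
  "K_n2 \<epsilon> \<Lambda>2 \<Omega>2 = K_n_gen \<epsilon> \<Lambda>2 \<Omega>2 W2 sm2 sp2"

definition target00 :: mat4 where
  "target00 = (\<chi> i j. if i = (False, False) \<and> j = (False, False) then 1 else 0)"

end

theory Submission
  imports Defs
begin


lemma ode_unique_zero:
  fixes y :: "real \<Rightarrow> 'a::real_inner" and L :: "'a \<Rightarrow> 'a"
  assumes der: "\<And>t. t\<in>{0..T} \<Longrightarrow> (y has_vector_derivative L (y t)) (at t within {0..T})"
  and bnd: "\<And>x. norm (L x) \<le> K * norm x" and K: "K \<ge> 0"
  and a: "a \<in> {0..T}" "y a = 0" and t: "t \<in> {0..T}"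
  shows "y t = 0"
proof -
  define f where "f s = y s \<bullet> y s" for s
  have fd: "(f has_real_derivative 2 * (y s \<bullet> L (y s))) (at s within {0..T})" if s: "s\<in>{0..T}" for s
  proof -
    have d: "(y has_derivative (\<lambda>h. h *\<^sub>R L (y s))) (at s within {0..T})"
      using der[OF s] by (simp add: has_vector_derivative_def)
    have "((\<lambda>s. y s \<bullet> y s) has_derivative (\<lambda>h. y s \<bullet> (h *\<^sub>R L (y s)) + (h *\<^sub>R L (y s)) \<bullet> y s)) (at s within {0..T})"
      by (rule has_derivative_inner[OF d d])
    then show ?thesis unfolding has_field_derivative_def f_def
      by (rule has_derivative_eq_rhs) (auto simp: inner_commute algebra_simps)
  qed
  have fnn: "f s \<ge> 0" for s by (simp add: f_def)
  have fb: "\<bar>2 * (y s \<bullet> L (y s))\<bar> \<le> 2 * K * f s" for s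
  proof -
    have "\<bar>y s \<bullet> L (y s)\<bar> \<le> norm (y s) * norm (L (y s))" by (rule Cauchy_Schwarz_ineq2)
    also have "\<dots> \<le> norm (y s) * (K * norm (y s))" by (rule mult_left_mono[OF bnd]) simp
    also have "\<dots> = K * f s" unfolding f_def dot_square_norm power2_eq_square by (simp only: mult_ac)
    finally show ?thesis by simp
  qed
  have fcont: "continuous_on {0..T} f"
    unfolding continuous_on_eq_continuous_within
  proof
    fix s assume "s \<in> {0..T}"
    then show "continuous (at s within {0..T}) f" by (rule DERIV_continuous[OF fd])
  qed
  have fat: "(f has_real_derivative 2 * (y s \<bullet> L (y s))) (at s)" if "0 < s" "s < T" for s
  proof -
    have "at s within {0..T} = at s" by (rule at_within_interior) (use that in simp)
    moreover have "s \<in> {0..T}" using that by simp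
    ultimately show ?thesis using fd[of s] by simp
  qed
  have fa: "f a = 0" using a by (simp add: f_def)
  have "f t = 0"
  proof (cases "a \<le> t")
    case True
    define g where "g s = f s * exp (- (2*K) * s)" for s
    have "g t \<le> g a"
    proof (rule DERIV_nonpos_imp_decreasing_open[OF True])
      fix x assume x: "a < x" "x < t"
      then have x0: "0 < x" "x < T" using a t by auto
      have "(g has_real_derivative (2 * (y x \<bullet> L (y x))) * exp (- (2*K) * x) + exp (- (2*K) * x) * (- (2*K)) * f x) (at x)"
        unfolding g_def
      proof (rule DERIV_mult[OF fat[OF x0]])
        show "((\<lambda>s. exp (- (2*K) * s)) has_real_derivative exp (- (2*K) * x) * (- (2*K))) (at x)"
          by (auto intro!: derivative_eq_intros)
      qed
      moreover have "(2 * (y x \<bullet> L (y x))) * exp (- (2*K) * x) + exp (- (2*K) * x) * (- (2*K)) * f x \<le> 0"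
      proof -
        have "2 * (y x \<bullet> L (y x)) \<le> 2 * K * f x" using fb[of x] by linarith
        then have "(2 * (y x \<bullet> L (y x))) * exp (- (2*K) * x) \<le> (2 * K * f x) * exp (- (2*K) * x)"
          by (rule mult_right_mono) simp
        then show ?thesis by (simp add: algebra_simps)
      qed
      ultimately show "\<exists>y. DERIV g x :> y \<and> y \<le> 0" by blast
    next
      have fs: "continuous_on {a..t} f" using fcont by (rule continuous_on_subset) (use a t in auto)
      show "continuous_on {a..t} g" unfolding g_def
        by (intro continuous_on_mult fs continuous_on_exp continuous_on_mult_left continuous_on_id)
    qed
    then have "f t * exp (- (2*K) * t) \<le> 0" using fa by (simp add: g_def)
    then show ?thesis using fnn[of t] by (simp add: mult_le_0_iff)
  next
    case False
    then have ta: "t \<le> a" by simp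
    define g where "g s = f s * exp ((2*K) * s)" for s
    have "g t \<le> g a"
    proof (rule DERIV_nonneg_imp_increasing_open[OF ta])
      fix x assume x: "t < x" "x < a"
      then have x0: "0 < x" "x < T" using a t by auto
      have "(g has_real_derivative (2 * (y x \<bullet> L (y x))) * exp ((2*K) * x) + exp ((2*K) * x) * (2*K) * f x) (at x)"
        unfolding g_def
      proof (rule DERIV_mult[OF fat[OF x0]])
        show "((\<lambda>s. exp ((2*K) * s)) has_real_derivative exp ((2*K) * x) * (2*K)) (at x)"
          by (auto intro!: derivative_eq_intros)
      qed
      moreover have "(2 * (y x \<bullet> L (y x))) * exp ((2*K) * x) + exp ((2*K) * x) * (2*K) * f x \<ge> 0"
      proof -
        have "- (2 * K * f x) \<le> 2 * (y x \<bullet> L (y x))" using fb[of x] by linarith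
        then have "(- (2 * K * f x)) * exp ((2*K) * x) \<le> (2 * (y x \<bullet> L (y x))) * exp ((2*K) * x)"
          by (rule mult_right_mono) simp
        then have "- (2 * K * f x * exp ((2*K) * x)) \<le> 2 * (y x \<bullet> L (y x)) * exp ((2*K) * x)" by simp
        moreover have "exp ((2*K) * x) * (2*K) * f x = 2 * K * f x * exp ((2*K) * x)" by (simp only: mult_ac)
        ultimately show ?thesis by linarith
      qed
      ultimately show "\<exists>y. DERIV g x :> y \<and> y \<ge> 0" by blast
    next
      have fs: "continuous_on {t..a} f" using fcont by (rule continuous_on_subset) (use a t in auto)
      show "continuous_on {t..a} g" unfolding g_def
        by (intro continuous_on_mult fs continuous_on_exp continuous_on_mult_left continuous_on_id)
    qed
    then have "f t * exp ((2*K) * t) \<le> 0" using fa by (simp add: g_def)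
    then show ?thesis using fnn[of t] by (simp add: mult_le_0_iff)
  qed
  then show ?thesis by (simp add: f_def)
qed

lemma sum_bb: "sum f (UNIV::(bool\<times>bool) set) = f (False,False) + f (False,True) + f (True,False) + f (True,True)"
  by (simp add: UNIV_Times_UNIV[symmetric] sum.cartesian_product[symmetric] UNIV_bool add.assoc)
lemmas mdefs = matrix_matrix_mult_def sum_bb kron_def sigma_minus_def sigma_plus_def sigma_z_def I2_def mat_def
lemma sm1_l: "(sm1 ** X) $ i $ j = (if \<not> fst i then X $ (True, snd i) $ j else 0)"
  by (cases i) (simp add: mdefs sm1_def)
lemma sp1_r: "(X ** sp1) $ i $ j = (if \<not> fst j then X $ i $ (True, snd j) else 0)"
  by (cases j) (simp add: mdefs sp1_def)
lemma sp1_l: "(sp1 ** X) $ i $ j = (if fst i then X $ (False, snd i) $ j else 0)"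
  by (cases i) (simp add: mdefs sp1_def)
lemma sm1_r: "(X ** sm1) $ i $ j = (if fst j then X $ i $ (False, snd j) else 0)"
  by (cases j) (simp add: mdefs sm1_def)
lemma sm2_l: "(sm2 ** X) $ i $ j = (if \<not> snd i then X $ (fst i, True) $ j else 0)"
  by (cases i) (simp add: mdefs sm2_def)
lemma sp2_r: "(X ** sp2) $ i $ j = (if \<not> snd j then X $ i $ (fst j, True) else 0)"
  by (cases j) (simp add: mdefs sp2_def)
lemma sp2_l: "(sp2 ** X) $ i $ j = (if snd i then X $ (fst i, False) $ j else 0)"
  by (cases i) (simp add: mdefs sp2_def)
lemma sm2_r: "(X ** sm2) $ i $ j = (if snd j then X $ i $ (fst j, False) else 0)"
  by (cases j) (simp add: mdefs sm2_def)
lemma W1_l: "(W1 ** X) $ i $ j = (if fst i then - X $ i $ j else X $ i $ j)"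
  by (cases i) (simp add: mdefs W1_def)
lemma W1_r: "(X ** W1) $ i $ j = (if fst j then - X $ i $ j else X $ i $ j)"
  by (cases j) (simp add: mdefs W1_def)
lemma W2_l: "(W2 ** X) $ i $ j = (if snd i then - X $ i $ j else X $ i $ j)"
  by (cases i) (simp add: mdefs W2_def)
lemma W2_r: "(X ** W2) $ i $ j = (if snd j then - X $ i $ j else X $ i $ j)"
  by (cases j) (simp add: mdefs W2_def)
lemma cscale_nth[simp]: "cscale c A $ i $ j = c * A $ i $ j" by (simp add: cscale_def)
lemma cscale0[simp]: "cscale 0 A = 0" by (simp add: cscale_def vec_eq_iff)
lemma mm_add_l: "((A + B) ** X) $ i $ j = (A ** X) $ i $ j + (B ** X) $ i $ j"
  by (simp add: matrix_matrix_mult_def distrib_right sum.distrib)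
lemma mm_add_r: "(X ** (A + B)) $ i $ j = (X ** A) $ i $ j + (X ** B) $ i $ j"
  by (simp add: matrix_matrix_mult_def distrib_left sum.distrib)
lemma mm_cs_l: "((cscale c A) ** X) $ i $ j = c * (A ** X) $ i $ j"
  by (simp add: matrix_matrix_mult_def cscale_def sum_distrib_left mult.assoc)
lemma mm_cs_r: "(X ** (cscale c A)) $ i $ j = c * (X ** A) $ i $ j"
  by (simp add: matrix_matrix_mult_def cscale_def sum_distrib_left mult_ac)
lemma H0_l: "(H0 w1 w2 ** X) $ i $ j = of_real (w1/2) * (if fst i then - X $ i $ j else X $ i $ j) + of_real (w2/2) * (if snd i then - X $ i $ j else X $ i $ j)"
  by (simp add: H0_def mm_add_l mm_cs_l W1_l W2_l)
lemma H0_r: "(X ** H0 w1 w2) $ i $ j = of_real (w1/2) * (if fst j then - X $ i $ j else X $ i $ j) + of_real (w2/2) * (if snd j then - X $ i $ j else X $ i $ j)"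
  by (simp add: H0_def mm_add_r mm_cs_r W1_r W2_r)
lemma P1_r: "(X ** (sp1 ** sm1)) $ i $ j = (if fst j then X $ i $ j else 0)"
  by (cases j) (simp add: matrix_mul_assoc sm1_r sp1_r)
lemma N1_r: "(X ** (sm1 ** sp1)) $ i $ j = (if fst j then 0 else X $ i $ j)"
  by (cases j) (simp add: matrix_mul_assoc sm1_r sp1_r)
lemma P2_r: "(X ** (sp2 ** sm2)) $ i $ j = (if snd j then X $ i $ j else 0)"
  by (cases j) (simp add: matrix_mul_assoc sm2_r sp2_r)
lemma N2_r: "(X ** (sm2 ** sp2)) $ i $ j = (if snd j then 0 else X $ i $ j)"
  by (cases j) (simp add: matrix_mul_assoc sm2_r sp2_r)
lemma P1_l: "((sp1 ** sm1) ** X) $ i $ j = (if fst i then X $ i $ j else 0)"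
  by (cases i) (simp add: matrix_mul_assoc[symmetric] sm1_l sp1_l)
lemma N1_l: "((sm1 ** sp1) ** X) $ i $ j = (if fst i then 0 else X $ i $ j)"
  by (cases i) (simp add: matrix_mul_assoc[symmetric] sm1_l sp1_l)
lemma P2_l: "((sp2 ** sm2) ** X) $ i $ j = (if snd i then X $ i $ j else 0)"
  by (cases i) (simp add: matrix_mul_assoc[symmetric] sm2_l sp2_l)
lemma N2_l: "((sm2 ** sp2) ** X) $ i $ j = (if snd i then 0 else X $ i $ j)"
  by (cases i) (simp add: matrix_mul_assoc[symmetric] sm2_l sp2_l)
lemma Hc0: "Hc e w1 w2 l1 l2 V 0 0 0 = H0 w1 w2" by (simp add: Hc_def)
lemmas ent = master_rhs_def adjoint_rhs_def Hc0 LD_def LD_adj_def commut_def anticommut_def H0_l H0_r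
  sm1_l sp1_l sm1_r sp1_r sm2_l sp2_l sm2_r sp2_r W1_l W1_r W2_l W2_r
  matrix_mul_assoc[symmetric] P1_r N1_r P2_r N2_r
lemma all_bb: "(\<forall>i::bool\<times>bool. P i) \<longleftrightarrow> P (False,False) \<and> P (False,True) \<and> P (True,False) \<and> P (True,True)"
  by (metis (full_types) surj_pair)
definition hh :: "real \<Rightarrow> real \<Rightarrow> bool \<times> bool \<Rightarrow> complex" where
  "hh w1 w2 i = of_real (w1/2) * (if fst i then -1 else 1) + of_real (w2/2) * (if snd i then -1 else 1)"
lemma master_nth: "master_rhs e w1 w2 l1 l2 o1 o2 V 0 0 0 X $ i $ j =
   - \<i> * (hh w1 w2 i * X $ i $ j - X $ i $ j * hh w1 w2 j)
   + of_real e * (of_real o1 * (2 * (if \<not> fst i \<and> \<not> fst j then X $ (True, snd i) $ (True, snd j) else 0) - ((if fst i then X $ i $ j else 0) + (if fst j then X $ i $ j else 0)))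
     + of_real o2 * (2 * (if \<not> snd i \<and> \<not> snd j then X $ (fst i, True) $ (fst j, True) else 0) - ((if snd i then X $ i $ j else 0) + (if snd j then X $ i $ j else 0))))"
  unfolding master_rhs_def Hc0 LD_def commut_def anticommut_def
  by (simp add: H0_l H0_r hh_def P1_l P2_l P1_r P2_r sm1_l sp1_r sm2_l sp2_r algebra_simps del: of_real_divide)
lemma adj_nth: "adjoint_rhs e w1 w2 l1 l2 o1 o2 V 0 0 0 X $ i $ j =
   - \<i> * (hh w1 w2 i * X $ i $ j - X $ i $ j * hh w1 w2 j)
   - of_real e * (of_real o1 * (2 * (if fst i \<and> fst j then X $ (False, snd i) $ (False, snd j) else 0) - ((if fst i then X $ i $ j else 0) + (if fst j then X $ i $ j else 0)))
     + of_real o2 * (2 * (if snd i \<and> snd j then X $ (fst i, False) $ (fst j, False) else 0) - ((if snd i then X $ i $ j else 0) + (if snd j then X $ i $ j else 0))))"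
  unfolding adjoint_rhs_def Hc0 LD_adj_def commut_def anticommut_def
  by (simp add: H0_l H0_r hh_def P1_l P2_l P1_r P2_r sm1_r sp1_l sm2_r sp2_l algebra_simps del: of_real_divide)

definition offd :: "mat4 \<Rightarrow> mat4" where "offd X = (\<chi> i j. if i = j then 0 else X $ i $ j)"
lemma offd_nth: "offd X $ i $ j = (if i = j then 0 else X $ i $ j)" by (simp add: offd_def)
lemma master_offd: "master_rhs e w1 w2 l1 l2 o1 o2 V 0 0 0 (offd X) = offd (master_rhs e w1 w2 l1 l2 o1 o2 V 0 0 0 X)"
  unfolding vec_eq_iff
proof (intro allI)
  fix i j :: "bool \<times> bool"
  show "master_rhs e w1 w2 l1 l2 o1 o2 V 0 0 0 (offd X) $ i $ j = offd (master_rhs e w1 w2 l1 l2 o1 o2 V 0 0 0 X) $ i $ j"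
    by (cases i; cases j) (auto simp: master_nth offd_nth)
qed
lemma adj_offd: "adjoint_rhs e w1 w2 l1 l2 o1 o2 V 0 0 0 (offd X) = offd (adjoint_rhs e w1 w2 l1 l2 o1 o2 V 0 0 0 X)"
  unfolding vec_eq_iff
proof (intro allI)
  fix i j :: "bool \<times> bool"
  show "adjoint_rhs e w1 w2 l1 l2 o1 o2 V 0 0 0 (offd X) $ i $ j = offd (adjoint_rhs e w1 w2 l1 l2 o1 o2 V 0 0 0 X) $ i $ j"
    by (cases i; cases j) (auto simp: adj_nth offd_nth)
qed
lemma sR_nth: "(r *\<^sub>R (X::mat4)) $ i $ j = of_real r * X $ i $ j" unfolding vector_scaleR_component by (rule scaleR_conv_of_real)
lemma master_lin: "linear (master_rhs e w1 w2 l1 l2 o1 o2 V 0 0 0)"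
  by (rule linearI) (simp_all add: vec_eq_iff master_nth sR_nth algebra_simps)
lemma adj_lin: "linear (adjoint_rhs e w1 w2 l1 l2 o1 o2 V 0 0 0)"
  by (rule linearI) (simp_all add: vec_eq_iff adj_nth sR_nth algebra_simps)
lemma offd_lin: "linear offd"
  by (rule linearI) (simp_all add: vec_eq_iff offd_nth)

definition dg :: "(bool \<times> bool \<Rightarrow> complex) \<Rightarrow> mat4" where "dg p = (\<chi> i j. if i = j then p i else 0)"
lemma dg_nth: "dg p $ i $ j = (if i = j then p i else 0)" by (simp add: dg_def)
lemma diag_dg: "is_diag X \<Longrightarrow> X = dg (\<lambda>i. X $ i $ i)"
  by (simp add: is_diag_def dg_def vec_eq_iff)
lemma dg_is_diag: "is_diag (dg p)" by (simp add: is_diag_def dg_nth)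
lemma dg_l: "(dg p ** X) $ i $ j = p i * X $ i $ j"
  by (cases i) (simp add: matrix_matrix_mult_def sum_bb dg_nth)
lemma dg_r: "(X ** dg p) $ i $ j = X $ i $ j * p j"
  by (cases j) (simp add: matrix_matrix_mult_def sum_bb dg_nth)
lemma hs_dg: "hs_inner (dg c) M = (\<Sum>i\<in>UNIV. cnj (c i) * M $ i $ i)"
proof -
  have "cadj (dg c) = dg (\<lambda>i. cnj (c i))" by (simp add: cadj_def dg_def vec_eq_iff)
  then show ?thesis by (simp add: hs_inner_def trace_def dg_l)
qed
lemma Ku_dg: "K_u V (dg c) (dg r) = 0"
  by (simp add: K_u_def hs_dg commut_def dg_l dg_r algebra_simps)
lemma Kn1_gen: "K_n1 e l o1 (dg c) R = of_real (2 * e * o1) * (\<Sum>b\<in>UNIV. cnj (c (False,b) - c (True,b)) * (R $ (True,b) $ (True,b) - R $ (False,b) $ (False,b)))"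
  by (simp add: K_n1_def K_n_gen_def hs_dg sum_bb commut_def W1_l W1_r sm1_l sp1_l sm1_r sp1_r UNIV_bool algebra_simps)
lemma Kn2_gen: "K_n2 e l o2 (dg c) R = of_real (2 * e * o2) * (\<Sum>a\<in>UNIV. cnj (c (a,False) - c (a,True)) * (R $ (a,True) $ (a,True) - R $ (a,False) $ (a,False)))"
  by (simp add: K_n2_def K_n_gen_def hs_dg sum_bb commut_def W2_l W2_r sm2_l sp2_l sm2_r sp2_r UNIV_bool algebra_simps)
lemma Kn1_dg: "K_n1 e l o1 (dg c) (dg r) = of_real (2 * e * o1) * (\<Sum>b\<in>UNIV. cnj (c (False,b) - c (True,b)) * (r (True,b) - r (False,b)))"
  by (simp add: Kn1_gen dg_nth)
lemma Kn2_dg: "K_n2 e l o2 (dg c) (dg r) = of_real (2 * e * o2) * (\<Sum>a\<in>UNIV. cnj (c (a,False) - c (a,True)) * (r (a,True) - r (a,False)))"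
  by (simp add: Kn2_gen dg_nth)
lemma master_dg: "master_rhs e w1 w2 l1 l2 o1 o2 V 0 0 0 (dg p) = dg (\<lambda>i. of_real e * (of_real o1 * (if fst i then -2 * p i else 2 * p (True, snd i)) + of_real o2 * (if snd i then -2 * p i else 2 * p (fst i, True))))" (is "?L = ?R")
  unfolding vec_eq_iff
proof (intro allI)
  fix i j :: "bool \<times> bool"
  show "?L $ i $ j = ?R $ i $ j" by (cases i; cases j) (auto simp: master_nth dg_nth algebra_simps)
qed
lemma adj_dg: "adjoint_rhs e w1 w2 l1 l2 o1 o2 V 0 0 0 (dg p) = dg (\<lambda>i. - of_real e * (of_real o1 * (if fst i then 2 * p (False, snd i) - 2 * p i else 0) + of_real o2 * (if snd i then 2 * p (fst i, False) - 2 * p i else 0)))" (is "?L = ?R")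
  unfolding vec_eq_iff
proof (intro allI)
  fix i j :: "bool \<times> bool"
  show "?L $ i $ j = ?R $ i $ j" by (cases i; cases j) (auto simp: adj_nth dg_nth algebra_simps)
qed
definition Eb :: "bool \<times> bool \<Rightarrow> mat4" where "Eb i = dg (\<lambda>k. if k = i then 1 else 0)"
lemma dg_sum: "dg (\<lambda>i. of_real (f i)) = (\<Sum>i\<in>UNIV. f i *\<^sub>R Eb i)"
  unfolding vec_eq_iff all_bb
  by (simp add: sum_bb Eb_def dg_nth scaleR_conv_of_real[where 'a=complex])
lemma dg_deriv:
  assumes "\<And>i. ((\<lambda>t. f i t) has_real_derivative f' i) (at t within S)"
  shows "((\<lambda>t. dg (\<lambda>i. of_real (f i t))) has_vector_derivative dg (\<lambda>i. of_real (f' i))) (at t within S)"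
proof -
  have "((\<lambda>t. \<Sum>i\<in>UNIV. f i t *\<^sub>R Eb i) has_vector_derivative (\<Sum>i\<in>UNIV. f i t *\<^sub>R 0 + f' i *\<^sub>R Eb i)) (at t within S)"
    by (intro has_vector_derivative_sum has_vector_derivative_scaleR assms has_vector_derivative_const)
  then show ?thesis by (simp add: dg_sum)
qed
definition qf :: "real \<Rightarrow> bool \<Rightarrow> real \<Rightarrow> real" where
  "qf \<alpha> a t = (if a then exp (- \<alpha> * t) / 2 else 1 - exp (- \<alpha> * t) / 2)"
lemma qf_deriv: "(qf \<alpha> a has_real_derivative (if a then - \<alpha> * qf \<alpha> a t else \<alpha> * qf \<alpha> True t)) (at t within S)"
  by (cases a) (auto simp: qf_def[abs_def] intro!: derivative_eq_intros)
definition df :: "real \<Rightarrow> real \<Rightarrow> bool \<Rightarrow> real \<Rightarrow> real" where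
  "df \<alpha> T a t = (if a then 1 - exp (\<alpha> * (t - T)) else 1)"
lemma df_deriv: "(df \<alpha> T a has_real_derivative (if a then \<alpha> * (df \<alpha> T True t - df \<alpha> T False t) else 0)) (at t within S)"
  by (cases a) (auto simp: df_def[abs_def] intro!: derivative_eq_intros)
definition rs where "rs e o1 o2 t = dg (\<lambda>i. of_real (qf (2 * e * o1) (fst i) t * qf (2 * e * o2) (snd i) t))"
definition cs where "cs e o1 o2 T t = dg (\<lambda>i. of_real (df (2 * e * o1) T (fst i) t * df (2 * e * o2) T (snd i) t))"
lemma rs_deriv: "(rs e o1 o2 has_vector_derivative master_rhs e w1 w2 l1 l2 o1 o2 V 0 0 0 (rs e o1 o2 t)) (at t within S)"
proof -
  have "((\<lambda>t. dg (\<lambda>i. of_real (qf (2 * e * o1) (fst i) t * qf (2 * e * o2) (snd i) t))) has_vector_derivative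
     dg (\<lambda>i. of_real ((if fst i then - (2 * e * o1) * qf (2 * e * o1) (fst i) t else (2 * e * o1) * qf (2 * e * o1) True t) * qf (2 * e * o2) (snd i) t
        + (if snd i then - (2 * e * o2) * qf (2 * e * o2) (snd i) t else (2 * e * o2) * qf (2 * e * o2) True t) * qf (2 * e * o1) (fst i) t))) (at t within S)"
    by (intro dg_deriv DERIV_mult qf_deriv)
  moreover have "dg (\<lambda>i. of_real ((if fst i then - (2 * e * o1) * qf (2 * e * o1) (fst i) t else (2 * e * o1) * qf (2 * e * o1) True t) * qf (2 * e * o2) (snd i) t
        + (if snd i then - (2 * e * o2) * qf (2 * e * o2) (snd i) t else (2 * e * o2) * qf (2 * e * o2) True t) * qf (2 * e * o1) (fst i) t))
     = master_rhs e w1 w2 l1 l2 o1 o2 V 0 0 0 (rs e o1 o2 t)"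
    unfolding rs_def master_dg
    by (rule arg_cong[where f=dg]) (auto simp: fun_eq_iff algebra_simps)
  ultimately show ?thesis unfolding rs_def by simp
qed
lemma cs_deriv: "(cs e o1 o2 T has_vector_derivative adjoint_rhs e w1 w2 l1 l2 o1 o2 V 0 0 0 (cs e o1 o2 T t)) (at t within S)"
proof -
  have "((\<lambda>t. dg (\<lambda>i. of_real (df (2 * e * o1) T (fst i) t * df (2 * e * o2) T (snd i) t))) has_vector_derivative
     dg (\<lambda>i. of_real ((if fst i then (2 * e * o1) * (df (2 * e * o1) T True t - df (2 * e * o1) T False t) else 0) * df (2 * e * o2) T (snd i) t
        + (if snd i then (2 * e * o2) * (df (2 * e * o2) T True t - df (2 * e * o2) T False t) else 0) * df (2 * e * o1) T (fst i) t))) (at t within S)"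
    by (intro dg_deriv DERIV_mult df_deriv)
  moreover have "dg (\<lambda>i. of_real ((if fst i then (2 * e * o1) * (df (2 * e * o1) T True t - df (2 * e * o1) T False t) else 0) * df (2 * e * o2) T (snd i) t
        + (if snd i then (2 * e * o2) * (df (2 * e * o2) T True t - df (2 * e * o2) T False t) else 0) * df (2 * e * o1) T (fst i) t))
     = adjoint_rhs e w1 w2 l1 l2 o1 o2 V 0 0 0 (cs e o1 o2 T t)"
    unfolding cs_def adj_dg
    by (rule arg_cong[where f=dg]) (auto simp: fun_eq_iff algebra_simps)
  ultimately show ?thesis unfolding cs_def by simp
qed
lemma real_id1:
  fixes e o1 o2 T t :: real
  shows "2 * e * o1 * ((df (2 * e * o1) T False t * df (2 * e * o2) T False t - df (2 * e * o1) T True t * df (2 * e * o2) T False t) *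
             (qf (2 * e * o1) True t * qf (2 * e * o2) False t - qf (2 * e * o1) False t * qf (2 * e * o2) False t)
        + (df (2 * e * o1) T False t * df (2 * e * o2) T True t - df (2 * e * o1) T True t * df (2 * e * o2) T True t) *
             (qf (2 * e * o1) True t * qf (2 * e * o2) True t - qf (2 * e * o1) False t * qf (2 * e * o2) True t))
   = - exp (-2 * e * (o1 + o2) * T) * (exp (2 * e * o1 * t) - 1) * (2 * exp (2 * e * o2 * T) - 1) * e * o1"
proof -
  define x where "x = exp (2 * e * o1 * t)"
  define X where "X = exp (2 * e * o1 * T)"
  define y where "y = exp (2 * e * o2 * t)"
  define Y where "Y = exp (2 * e * o2 * T)"
  have p: "x > 0" "X > 0" "y > 0" "Y > 0" by (simp_all add: x_def X_def y_def Y_def)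
  have e1: "exp (2 * e * o1 * (t - T)) = x / X" by (simp add: x_def X_def right_diff_distrib exp_diff)
  have e2: "exp (2 * e * o2 * (t - T)) = y / Y" by (simp add: y_def Y_def right_diff_distrib exp_diff)
  have e3: "exp (- (2 * e * o1) * t) = 1 / x" by (simp add: x_def exp_minus[symmetric] inverse_eq_divide[symmetric])
  have e4: "exp (- (2 * e * o2) * t) = 1 / y" by (simp add: y_def exp_minus[symmetric] inverse_eq_divide[symmetric])
  have e5: "exp (-2 * e * (o1 + o2) * T) = 1 / (X * Y)"
    by (simp add: X_def Y_def exp_add[symmetric] exp_minus[symmetric] inverse_eq_divide[symmetric] algebra_simps)
  have q: "qf (2 * e * o1) False t = 1 - 1/(2*x)" "qf (2 * e * o1) True t = 1/(2*x)"
     "qf (2 * e * o2) False t = 1 - 1/(2*y)" "qf (2 * e * o2) True t = 1/(2*y)"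
    unfolding qf_def e3 e4 by simp_all
  have d: "df (2 * e * o1) T False t = 1" "df (2 * e * o1) T True t = 1 - x/X"
     "df (2 * e * o2) T False t = 1" "df (2 * e * o2) T True t = 1 - y/Y"
    unfolding df_def e1 e2 by simp_all
  have "2 * e * o1 * ((1 * 1 - (1 - x/X) * 1) * ((1/(2*x)) * (1 - 1/(2*y)) - (1 - 1/(2*x)) * (1 - 1/(2*y)))
        + (1 * (1 - y/Y) - (1 - x/X) * (1 - y/Y)) * ((1/(2*x)) * (1/(2*y)) - (1 - 1/(2*x)) * (1/(2*y))))
      = - (1 / (X * Y)) * (x - 1) * (2 * Y - 1) * e * o1"
    using p by (simp add: field_simps) (simp add: algebra_simps)?
  then show ?thesis unfolding q d e5 x_def Y_def .
qed


lemma real_id2: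
  fixes e o1 o2 T t :: real
  shows "2 * e * o2 * ((df (2 * e * o1) T False t * df (2 * e * o2) T False t - df (2 * e * o1) T False t * df (2 * e * o2) T True t) *
             (qf (2 * e * o1) False t * qf (2 * e * o2) True t - qf (2 * e * o1) False t * qf (2 * e * o2) False t)
        + (df (2 * e * o1) T True t * df (2 * e * o2) T False t - df (2 * e * o1) T True t * df (2 * e * o2) T True t) *
             (qf (2 * e * o1) True t * qf (2 * e * o2) True t - qf (2 * e * o1) True t * qf (2 * e * o2) False t))
   = - exp (-2 * e * (o1 + o2) * T) * (exp (2 * e * o2 * t) - 1) * (2 * exp (2 * e * o1 * T) - 1) * e * o2"
proof -
  define x where "x = exp (2 * e * o1 * t)"
  define X where "X = exp (2 * e * o1 * T)"
  define y where "y = exp (2 * e * o2 * t)"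
  define Y where "Y = exp (2 * e * o2 * T)"
  have p: "x > 0" "X > 0" "y > 0" "Y > 0" by (simp_all add: x_def X_def y_def Y_def)
  have e1: "exp (2 * e * o1 * (t - T)) = x / X" by (simp add: x_def X_def right_diff_distrib exp_diff)
  have e2: "exp (2 * e * o2 * (t - T)) = y / Y" by (simp add: y_def Y_def right_diff_distrib exp_diff)
  have e3: "exp (- (2 * e * o1) * t) = 1 / x" by (simp add: x_def exp_minus[symmetric] inverse_eq_divide[symmetric])
  have e4: "exp (- (2 * e * o2) * t) = 1 / y" by (simp add: y_def exp_minus[symmetric] inverse_eq_divide[symmetric])
  have e5: "exp (-2 * e * (o1 + o2) * T) = 1 / (X * Y)"
    by (simp add: X_def Y_def exp_add[symmetric] exp_minus[symmetric] inverse_eq_divide[symmetric] algebra_simps)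
  have q: "qf (2 * e * o1) False t = 1 - 1/(2*x)" "qf (2 * e * o1) True t = 1/(2*x)"
     "qf (2 * e * o2) False t = 1 - 1/(2*y)" "qf (2 * e * o2) True t = 1/(2*y)"
    unfolding qf_def e3 e4 by simp_all
  have d: "df (2 * e * o1) T False t = 1" "df (2 * e * o1) T True t = 1 - x/X"
     "df (2 * e * o2) T False t = 1" "df (2 * e * o2) T True t = 1 - y/Y"
    unfolding df_def e1 e2 by simp_all
  have "2 * e * o2 * ((1 * 1 - 1 * (1 - y/Y)) * ((1 - 1/(2*x)) * (1/(2*y)) - (1 - 1/(2*x)) * (1 - 1/(2*y)))
        + ((1 - x/X) * 1 - (1 - x/X) * (1 - y/Y)) * ((1/(2*x)) * (1/(2*y)) - (1/(2*x)) * (1 - 1/(2*y))))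
      = - (1 / (X * Y)) * (y - 1) * (2 * X - 1) * e * o2"
    using p by (simp add: field_simps) (simp add: algebra_simps)?
  then show ?thesis unfolding q d e5 y_def X_def .
qed

lemma Kn1_val: "K_n1 e l o1 (cs e o1 o2 T t) (rs e o1 o2 t) =
   of_real (- exp (-2 * e * (o1 + o2) * T) * (exp (2 * e * o1 * t) - 1) * (2 * exp (2 * e * o2 * T) - 1) * e * o1)"
  unfolding real_id1[symmetric] cs_def rs_def Kn1_dg
  by (simp add: UNIV_bool del: of_real_mult of_real_diff)
    (simp only: of_real_mult of_real_diff of_real_add)

lemma Kn2_val: "K_n2 e l o2 (cs e o1 o2 T t) (rs e o1 o2 t) =
   of_real (- exp (-2 * e * (o1 + o2) * T) * (exp (2 * e * o2 * t) - 1) * (2 * exp (2 * e * o1 * T) - 1) * e * o2)"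
  unfolding real_id2[symmetric] cs_def rs_def Kn2_dg
  by (simp add: UNIV_bool del: of_real_mult of_real_diff)
    (simp only: of_real_mult of_real_diff of_real_add)

lemma rs0: "rs e o1 o2 0 = cscale (1/4) I4"
  unfolding vec_eq_iff all_bb by (simp add: rs_def dg_nth qf_def I4_def mat_def)

lemma csT: "cs e o1 o2 T T = target00"
  unfolding vec_eq_iff all_bb by (simp add: cs_def dg_nth df_def target00_def)

lemma offd_zero: "offd X = 0 \<longleftrightarrow> is_diag X"
  by (auto simp: vec_eq_iff offd_nth is_diag_def)

lemma sup_nonpos:
  fixes k m :: real assumes "k \<le> 0" "m > 0"
  shows "(SUP n\<in>{0..m}. k * n) = k * 0"
  unfolding mult_zero_right
  by (rule cSup_eq_maximum) (use assms in \<open>auto intro: mult_nonpos_nonneg image_eqI[where x=0]\<close>)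

lemma Ku_diag: assumes "is_diag C" "is_diag R" shows "K_u V C R = 0"
  using Ku_dg[of V "\<lambda>i. C$i$i" "\<lambda>i. R$i$i"]
  by (simp only: diag_dg[OF assms(1), symmetric] diag_dg[OF assms(2), symmetric])

lemma negl: "0 \<le> a * b * c * d * e \<Longrightarrow> - a * b * c * d * e \<le> (0::real)" by simp

theorem mainTheorem6:
  fixes \<epsilon> \<omega>1 \<omega>2 \<Lambda>1 \<Lambda>2 \<Omega>1 \<Omega>2 T \<mu> n_max :: real
    and V \<rho>0 \<rho>_target :: mat4
    and \<rho> chi :: "real \<Rightarrow> mat4"
  assumes pos: "\<epsilon> > 0" "\<omega>1 > 0" "\<omega>2 > 0" "\<Lambda>1 > 0" "\<Lambda>2 > 0" "\<Omega>1 > 0" "\<Omega>2 > 0"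
    and T_pos: "T > 0" and \<mu>_pos: "\<mu> > 0" and nmax_pos: "n_max > 0"
    and V_herm: "hermitian V"
    and dens0: "density_matrix \<rho>0" and denst: "density_matrix \<rho>_target"
    and diag0: "is_diag \<rho>0" and diagt: "is_diag \<rho>_target"
    and \<rho>_sol: "\<forall>t\<in>{0..T}. (\<rho> has_vector_derivative
                  master_rhs \<epsilon> \<omega>1 \<omega>2 \<Lambda>1 \<Lambda>2 \<Omega>1 \<Omega>2 V 0 0 0 (\<rho> t)) (at t within {0..T})"
    and \<rho>_init: "\<rho> 0 = \<rho>0"
    and chi_sol: "\<forall>t\<in>{0..T}. (chi has_vector_derivative
                  adjoint_rhs \<epsilon> \<omega>1 \<omega>2 \<Lambda>1 \<Lambda>2 \<Omega>1 \<Omega>2 V 0 0 0 (chi t)) (at t within {0..T})"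
    and chi_final: "chi T = \<rho>_target"
  shows "(\<forall>t\<in>{0..T}. is_diag (\<rho> t) \<and> is_diag (chi t) \<and> K_u V (chi t) (\<rho> t) = 0)
    \<and> (\<rho>0 = cscale (1/4) I4 \<and> \<rho>_target = target00 \<longrightarrow>
        (\<forall>t\<in>{0..T}.
           K_n1 \<epsilon> \<Lambda>1 \<Omega>1 (chi t) (\<rho> t) =
             of_real (- exp (-2 * \<epsilon> * (\<Omega>1 + \<Omega>2) * T) * (exp (2 * \<epsilon> * \<Omega>1 * t) - 1)
                        * (2 * exp (2 * \<epsilon> * \<Omega>2 * T) - 1) * \<epsilon> * \<Omega>1)
         \<and> - exp (-2 * \<epsilon> * (\<Omega>1 + \<Omega>2) * T) * (exp (2 * \<epsilon> * \<Omega>1 * t) - 1)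
                        * (2 * exp (2 * \<epsilon> * \<Omega>2 * T) - 1) * \<epsilon> * \<Omega>1 \<le> 0
         \<and> K_n2 \<epsilon> \<Lambda>2 \<Omega>2 (chi t) (\<rho> t) =
             of_real (- exp (-2 * \<epsilon> * (\<Omega>1 + \<Omega>2) * T) * (exp (2 * \<epsilon> * \<Omega>2 * t) - 1)
                        * (2 * exp (2 * \<epsilon> * \<Omega>1 * T) - 1) * \<epsilon> * \<Omega>2)
         \<and> - exp (-2 * \<epsilon> * (\<Omega>1 + \<Omega>2) * T) * (exp (2 * \<epsilon> * \<Omega>2 * t) - 1)
                        * (2 * exp (2 * \<epsilon> * \<Omega>1 * T) - 1) * \<epsilon> * \<Omega>2 \<le> 0
         \<and> (SUP u\<in>{-\<mu>..\<mu>}. Re (K_u V (chi t) (\<rho> t)) * u) = Re (K_u V (chi t) (\<rho> t)) * 0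
         \<and> (SUP n\<in>{0..n_max}. Re (K_n1 \<epsilon> \<Lambda>1 \<Omega>1 (chi t) (\<rho> t)) * n)
              = Re (K_n1 \<epsilon> \<Lambda>1 \<Omega>1 (chi t) (\<rho> t)) * 0
         \<and> (SUP n\<in>{0..n_max}. Re (K_n2 \<epsilon> \<Lambda>2 \<Omega>2 (chi t) (\<rho> t)) * n)
              = Re (K_n2 \<epsilon> \<Lambda>2 \<Omega>2 (chi t) (\<rho> t)) * 0))"
  proof -
  define L where "L = master_rhs \<epsilon> \<omega>1 \<omega>2 \<Lambda>1 \<Lambda>2 \<Omega>1 \<Omega>2 V 0 0 0"
  define A where "A = adjoint_rhs \<epsilon> \<omega>1 \<omega>2 \<Lambda>1 \<Lambda>2 \<Omega>1 \<Omega>2 V 0 0 0"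
  have bL: "bounded_linear L" unfolding L_def linear_conv_bounded_linear[symmetric] by (rule master_lin)
  have bA: "bounded_linear A" unfolding A_def linear_conv_bounded_linear[symmetric] by (rule adj_lin)
  have bO: "bounded_linear offd" unfolding linear_conv_bounded_linear[symmetric] by (rule offd_lin)
  obtain KL where KL: "\<And>x. norm (L x) \<le> KL * norm x" "KL \<ge> 0"
    using bounded_linear.pos_bounded[OF bL] by (metis less_le mult.commute)
  obtain KA where KA: "\<And>x. norm (A x) \<le> KA * norm x" "KA \<ge> 0"
    using bounded_linear.pos_bounded[OF bA] by (metis less_le mult.commute)
  have rd: "\<forall>t\<in>{0..T}. (\<rho> has_vector_derivative L (\<rho> t)) (at t within {0..T})" using \<rho>_sol by (simp add: L_def)
  have cd: "\<forall>t\<in>{0..T}. (chi has_vector_derivative A (chi t)) (at t within {0..T})" using chi_sol by (simp add: A_def)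
  have T0: "0 \<in> {0..T}" "T \<in> {0..T}" using T_pos by auto
  have diag_rho: "is_diag (\<rho> t)" if t: "t \<in> {0..T}" for t
  proof -
    have "offd (\<rho> t) = 0"
    proof (rule ode_unique_zero[where L=L and a=0, OF _ KL T0(1) _ t])
      fix s assume s: "s \<in> {0..T}"
      show "((\<lambda>t. offd (\<rho> t)) has_vector_derivative L (offd (\<rho> s))) (at s within {0..T})"
        using bounded_linear.has_vector_derivative[OF bO rd[rule_format, OF s]]
        by (simp add: L_def master_offd)
    next
      show "offd (\<rho> 0) = 0" using diag0 \<rho>_init by (simp add: offd_zero)
    qed
    then show ?thesis by (simp add: offd_zero)
  qed
  have diag_chi: "is_diag (chi t)" if t: "t \<in> {0..T}" for t
  proof -
    have "offd (chi t) = 0"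
    proof (rule ode_unique_zero[where L=A and a=T, OF _ KA T0(2) _ t])
      fix s assume s: "s \<in> {0..T}"
      show "((\<lambda>t. offd (chi t)) has_vector_derivative A (offd (chi s))) (at s within {0..T})"
        using bounded_linear.has_vector_derivative[OF bO cd[rule_format, OF s]]
        by (simp add: A_def adj_offd)
    next
      show "offd (chi T) = 0" using diagt chi_final by (simp add: offd_zero)
    qed
    then show ?thesis by (simp add: offd_zero)
  qed
  have Ku0: "K_u V (chi t) (\<rho> t) = 0" if t: "t \<in> {0..T}" for t
    by (rule Ku_diag[OF diag_chi[OF t] diag_rho[OF t]])
  have part2: "\<forall>t\<in>{0..T}.
           K_n1 \<epsilon> \<Lambda>1 \<Omega>1 (chi t) (\<rho> t) =
             of_real (- exp (-2 * \<epsilon> * (\<Omega>1 + \<Omega>2) * T) * (exp (2 * \<epsilon> * \<Omega>1 * t) - 1)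
                        * (2 * exp (2 * \<epsilon> * \<Omega>2 * T) - 1) * \<epsilon> * \<Omega>1)
         \<and> - exp (-2 * \<epsilon> * (\<Omega>1 + \<Omega>2) * T) * (exp (2 * \<epsilon> * \<Omega>1 * t) - 1)
                        * (2 * exp (2 * \<epsilon> * \<Omega>2 * T) - 1) * \<epsilon> * \<Omega>1 \<le> 0
         \<and> K_n2 \<epsilon> \<Lambda>2 \<Omega>2 (chi t) (\<rho> t) =
             of_real (- exp (-2 * \<epsilon> * (\<Omega>1 + \<Omega>2) * T) * (exp (2 * \<epsilon> * \<Omega>2 * t) - 1)
                        * (2 * exp (2 * \<epsilon> * \<Omega>1 * T) - 1) * \<epsilon> * \<Omega>2)
         \<and> - exp (-2 * \<epsilon> * (\<Omega>1 + \<Omega>2) * T) * (exp (2 * \<epsilon> * \<Omega>2 * t) - 1)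
                        * (2 * exp (2 * \<epsilon> * \<Omega>1 * T) - 1) * \<epsilon> * \<Omega>2 \<le> 0
         \<and> (SUP u\<in>{-\<mu>..\<mu>}. Re (K_u V (chi t) (\<rho> t)) * u) = Re (K_u V (chi t) (\<rho> t)) * 0
         \<and> (SUP n\<in>{0..n_max}. Re (K_n1 \<epsilon> \<Lambda>1 \<Omega>1 (chi t) (\<rho> t)) * n)
              = Re (K_n1 \<epsilon> \<Lambda>1 \<Omega>1 (chi t) (\<rho> t)) * 0
         \<and> (SUP n\<in>{0..n_max}. Re (K_n2 \<epsilon> \<Lambda>2 \<Omega>2 (chi t) (\<rho> t)) * n)
              = Re (K_n2 \<epsilon> \<Lambda>2 \<Omega>2 (chi t) (\<rho> t)) * 0"
    if h: "\<rho>0 = cscale (1/4) I4 \<and> \<rho>_target = target00"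
  proof
    fix t assume t: "t \<in> {0..T}"
    have rho_eq: "\<rho> t - rs \<epsilon> \<Omega>1 \<Omega>2 t = 0"
    proof (rule ode_unique_zero[where L=L and a=0, OF _ KL T0(1) _ t])
      fix s assume s: "s \<in> {0..T}"
      have "((\<lambda>t. \<rho> t - rs \<epsilon> \<Omega>1 \<Omega>2 t) has_vector_derivative L (\<rho> s) - L (rs \<epsilon> \<Omega>1 \<Omega>2 s)) (at s within {0..T})"
        using rd s unfolding L_def by (intro has_vector_derivative_diff rs_deriv) auto
      then show "((\<lambda>t. \<rho> t - rs \<epsilon> \<Omega>1 \<Omega>2 t) has_vector_derivative L (\<rho> s - rs \<epsilon> \<Omega>1 \<Omega>2 s)) (at s within {0..T})"
        by (simp add: linear_diff[OF bounded_linear.linear[OF bL]])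
    next
      show "\<rho> 0 - rs \<epsilon> \<Omega>1 \<Omega>2 0 = 0" using h \<rho>_init by (simp add: rs0)
    qed
    have chi_eq: "chi t - cs \<epsilon> \<Omega>1 \<Omega>2 T t = 0"
    proof (rule ode_unique_zero[where L=A and a=T, OF _ KA T0(2) _ t])
      fix s assume s: "s \<in> {0..T}"
      have "((\<lambda>t. chi t - cs \<epsilon> \<Omega>1 \<Omega>2 T t) has_vector_derivative A (chi s) - A (cs \<epsilon> \<Omega>1 \<Omega>2 T s)) (at s within {0..T})"
        using cd s unfolding A_def by (intro has_vector_derivative_diff cs_deriv) auto
      then show "((\<lambda>t. chi t - cs \<epsilon> \<Omega>1 \<Omega>2 T t) has_vector_derivative A (chi s - cs \<epsilon> \<Omega>1 \<Omega>2 T s)) (at s within {0..T})"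
        by (simp add: linear_diff[OF bounded_linear.linear[OF bA]])
    next
      show "chi T - cs \<epsilon> \<Omega>1 \<Omega>2 T T = 0" using h chi_final by (simp add: csT)
    qed
    have r: "\<rho> t = rs \<epsilon> \<Omega>1 \<Omega>2 t" and c: "chi t = cs \<epsilon> \<Omega>1 \<Omega>2 T t"
      using rho_eq chi_eq by simp_all
    have t0: "t \<ge> 0" using t by simp
    have x1: "1 \<le> exp (2 * \<epsilon> * \<Omega>1 * t)" "1 \<le> exp (2 * \<epsilon> * \<Omega>2 * t)"
      "1 \<le> exp (2 * \<epsilon> * \<Omega>1 * T)" "1 \<le> exp (2 * \<epsilon> * \<Omega>2 * T)"
      using pos t0 T_pos by (simp_all add: zero_le_mult_iff)
    have nn1: "0 \<le> exp (-2 * \<epsilon> * (\<Omega>1 + \<Omega>2) * T) * (exp (2 * \<epsilon> * \<Omega>1 * t) - 1)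
                        * (2 * exp (2 * \<epsilon> * \<Omega>2 * T) - 1) * \<epsilon> * \<Omega>1"
      by (rule mult_nonneg_nonneg[OF mult_nonneg_nonneg[OF mult_nonneg_nonneg[OF mult_nonneg_nonneg[OF exp_ge_zero]]]]) (use pos x1 in linarith)+
    have nn2: "0 \<le> exp (-2 * \<epsilon> * (\<Omega>1 + \<Omega>2) * T) * (exp (2 * \<epsilon> * \<Omega>2 * t) - 1)
                        * (2 * exp (2 * \<epsilon> * \<Omega>1 * T) - 1) * \<epsilon> * \<Omega>2"
      by (rule mult_nonneg_nonneg[OF mult_nonneg_nonneg[OF mult_nonneg_nonneg[OF mult_nonneg_nonneg[OF exp_ge_zero]]]]) (use pos x1 in linarith)+
    have neg1: "- exp (-2 * \<epsilon> * (\<Omega>1 + \<Omega>2) * T) * (exp (2 * \<epsilon> * \<Omega>1 * t) - 1)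
                        * (2 * exp (2 * \<epsilon> * \<Omega>2 * T) - 1) * \<epsilon> * \<Omega>1 \<le> 0"
      by (rule negl[OF nn1])
    have neg2: "- exp (-2 * \<epsilon> * (\<Omega>1 + \<Omega>2) * T) * (exp (2 * \<epsilon> * \<Omega>2 * t) - 1)
                        * (2 * exp (2 * \<epsilon> * \<Omega>1 * T) - 1) * \<epsilon> * \<Omega>2 \<le> 0"
      by (rule negl[OF nn2])
    have k1: "K_n1 \<epsilon> \<Lambda>1 \<Omega>1 (chi t) (\<rho> t) =
             of_real (- exp (-2 * \<epsilon> * (\<Omega>1 + \<Omega>2) * T) * (exp (2 * \<epsilon> * \<Omega>1 * t) - 1)
                        * (2 * exp (2 * \<epsilon> * \<Omega>2 * T) - 1) * \<epsilon> * \<Omega>1)"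
      unfolding r c by (rule Kn1_val)
    have k2: "K_n2 \<epsilon> \<Lambda>2 \<Omega>2 (chi t) (\<rho> t) =
             of_real (- exp (-2 * \<epsilon> * (\<Omega>1 + \<Omega>2) * T) * (exp (2 * \<epsilon> * \<Omega>2 * t) - 1)
                        * (2 * exp (2 * \<epsilon> * \<Omega>1 * T) - 1) * \<epsilon> * \<Omega>2)"
      unfolding r c by (rule Kn2_val)
    show "K_n1 \<epsilon> \<Lambda>1 \<Omega>1 (chi t) (\<rho> t) =
             of_real (- exp (-2 * \<epsilon> * (\<Omega>1 + \<Omega>2) * T) * (exp (2 * \<epsilon> * \<Omega>1 * t) - 1)
                        * (2 * exp (2 * \<epsilon> * \<Omega>2 * T) - 1) * \<epsilon> * \<Omega>1)
         \<and> - exp (-2 * \<epsilon> * (\<Omega>1 + \<Omega>2) * T) * (exp (2 * \<epsilon> * \<Omega>1 * t) - 1)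
                        * (2 * exp (2 * \<epsilon> * \<Omega>2 * T) - 1) * \<epsilon> * \<Omega>1 \<le> 0
         \<and> K_n2 \<epsilon> \<Lambda>2 \<Omega>2 (chi t) (\<rho> t) =
             of_real (- exp (-2 * \<epsilon> * (\<Omega>1 + \<Omega>2) * T) * (exp (2 * \<epsilon> * \<Omega>2 * t) - 1)
                        * (2 * exp (2 * \<epsilon> * \<Omega>1 * T) - 1) * \<epsilon> * \<Omega>2)
         \<and> - exp (-2 * \<epsilon> * (\<Omega>1 + \<Omega>2) * T) * (exp (2 * \<epsilon> * \<Omega>2 * t) - 1)
                        * (2 * exp (2 * \<epsilon> * \<Omega>1 * T) - 1) * \<epsilon> * \<Omega>2 \<le> 0
         \<and> (SUP u\<in>{-\<mu>..\<mu>}. Re (K_u V (chi t) (\<rho> t)) * u) = Re (K_u V (chi t) (\<rho> t)) * 0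
         \<and> (SUP n\<in>{0..n_max}. Re (K_n1 \<epsilon> \<Lambda>1 \<Omega>1 (chi t) (\<rho> t)) * n)
              = Re (K_n1 \<epsilon> \<Lambda>1 \<Omega>1 (chi t) (\<rho> t)) * 0
         \<and> (SUP n\<in>{0..n_max}. Re (K_n2 \<epsilon> \<Lambda>2 \<Omega>2 (chi t) (\<rho> t)) * n)
              = Re (K_n2 \<epsilon> \<Lambda>2 \<Omega>2 (chi t) (\<rho> t)) * 0"
    proof (intro conjI)
      show "(SUP u\<in>{-\<mu>..\<mu>}. Re (K_u V (chi t) (\<rho> t)) * u) = Re (K_u V (chi t) (\<rho> t)) * 0"
        using Ku0[OF t] \<mu>_pos by simp
      show "(SUP n\<in>{0..n_max}. Re (K_n1 \<epsilon> \<Lambda>1 \<Omega>1 (chi t) (\<rho> t)) * n)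
              = Re (K_n1 \<epsilon> \<Lambda>1 \<Omega>1 (chi t) (\<rho> t)) * 0"
        by (rule sup_nonpos[OF _ nmax_pos]) (use nn1 in \<open>simp only: k1 Re_complex_of_real\<close>)
      show "(SUP n\<in>{0..n_max}. Re (K_n2 \<epsilon> \<Lambda>2 \<Omega>2 (chi t) (\<rho> t)) * n)
              = Re (K_n2 \<epsilon> \<Lambda>2 \<Omega>2 (chi t) (\<rho> t)) * 0"
        by (rule sup_nonpos[OF _ nmax_pos]) (use nn2 in \<open>simp only: k2 Re_complex_of_real\<close>)
    qed (rule k1 k2 neg1 neg2)+
  qed
  have p1: "\<forall>t\<in>{0..T}. is_diag (\<rho> t) \<and> is_diag (chi t) \<and> K_u V (chi t) (\<rho> t) = 0"
    using diag_rho diag_chi Ku0 by blast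
  show ?thesis by (rule conjI[OF p1 impI[OF part2]])
qed

end
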